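(* Let $X_1,X_2,\dots$ be i.i.d. with an arbitrary distribution function $F$, and let $Y_k=\max\{X_1,\dots,X_k\}$, $k\ge1$. Fix integers $1\le i<j$, and write $I(\cdot)$ for the indicator function. (i) The conditional distribution function of $Y_{j+1}$ given $Y_j$ is $\Pr[Y_{j+1}\le y\mid Y_j]=F(y)I(y\ge Y_j)$, $y\in\mathbb{R}$; if moreover $i+1<j$, then $\Pr[Y_{j+1}\le y\mid Y_{i+1},Y_j]=\Pr[Y_{j+1}\le y\mid Y_j]$, $y\in\mathbb{R}$. (ii) The conditional distribution function of $Y_i$ given $Y_{i+1}$ is \[ \Pr[Y_i\le x\mid Y_{i+1}]=I(x\ge Y_{i+1})+I(x<Y_{i+1})\frac{F^i(x)}{\sum_{l=0}^{i}F^l(Y_{i+1})F^{i-l}(Y_{i+1}-)},\qquad x\in\mathbb{R}; \] if moreover $i+1<j$, then $\Pr[Y_i\le x\mid Y_{i+1},Y_j]=\Pr[Y_i\le x\mid Y_{i+1}]$, $x\in\mathbb{R}$. (iii) Given $(Y_{i+1},Y_j)$, the random variables $Y_i$ and $Y_{j+1}$ are conditionally independent.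
   Context: $F(y-)$ denotes the left limit $\lim_{t\uparrow y}F(t)$. *)

theory Defs
  imports "HOL-Probability.Probability"
begin

definition run_max :: "(nat \<Rightarrow> 'a \<Rightarrow> real) \<Rightarrow> nat \<Rightarrow> 'a \<Rightarrow> real" where
  "run_max X k \<omega> = Max ((\<lambda>l. X l \<omega>) ` {1..k})"

definition left_lim :: "(real \<Rightarrow> real) \<Rightarrow> real \<Rightarrow> real" where
  "left_lim F y = Lim (at_left y) F"

definition cond_prob :: "'a measure \<Rightarrow> 'a measure \<Rightarrow> 'a set \<Rightarrow> 'a \<Rightarrow> real" where
  "cond_prob M G A = real_cond_exp M G (indicator A)"

definition sigma_gen :: "'a measure \<Rightarrow> ('a \<Rightarrow> 'b::topological_space) \<Rightarrow> 'a measure" where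
  "sigma_gen M f = vimage_algebra (space M) f borel"

definition cond_indep :: "'a measure \<Rightarrow> 'a measure \<Rightarrow> ('a \<Rightarrow> real) \<Rightarrow> ('a \<Rightarrow> real) \<Rightarrow> bool" where
  "cond_indep M G U V \<longleftrightarrow>
     (\<forall>A\<in>sets borel. \<forall>B\<in>sets borel.
        AE \<omega> in M. cond_prob M G (U -` A \<inter> V -` B \<inter> space M) \<omega>
                    = cond_prob M G (U -` A \<inter> space M) \<omega> * cond_prob M G (V -` B \<inter> space M) \<omega>)"

end

theory Submission
  imports Defs
begin

lemma (in prob_space) indep_fubini:
  assumes ind: "indep_var S Z T W" and f[measurable]: "f \<in> borel_measurable (S \<Otimes>\<^sub>M T)"
  shows "(\<integral>\<^sup>+\<omega>. f (Z \<omega>, W \<omega>) \<partial>M) = (\<integral>\<^sup>+z. \<integral>\<^sup>+w. f (z,w) \<partial>distr M T W \<partial>distr M S Z)"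
    and "(\<integral>\<^sup>+\<omega>. f (Z \<omega>, W \<omega>) \<partial>M) = (\<integral>\<^sup>+w. \<integral>\<^sup>+z. f (z,w) \<partial>distr M S Z \<partial>distr M T W)"
proof -
  have rv[measurable]: "Z \<in> measurable M S" "W \<in> measurable M T"
    and eq: "distr M S Z \<Otimes>\<^sub>M distr M T W = distr M (S \<Otimes>\<^sub>M T) (\<lambda>x. (Z x, W x))"
    using ind by (auto simp: indep_var_distribution_eq)
  interpret Z: prob_space "distr M S Z" by (rule prob_space_distr) simp
  interpret W: prob_space "distr M T W" by (rule prob_space_distr) simp
  interpret P: pair_sigma_finite "distr M S Z" "distr M T W" ..
  have "(\<integral>\<^sup>+\<omega>. f (Z \<omega>, W \<omega>) \<partial>M) = integral\<^sup>N (distr M S Z \<Otimes>\<^sub>M distr M T W) f"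
    unfolding eq by (simp add: nn_integral_distr)
  then show "(\<integral>\<^sup>+\<omega>. f (Z \<omega>, W \<omega>) \<partial>M) = (\<integral>\<^sup>+z. \<integral>\<^sup>+w. f (z,w) \<partial>distr M T W \<partial>distr M S Z)"
    and "(\<integral>\<^sup>+\<omega>. f (Z \<omega>, W \<omega>) \<partial>M) = (\<integral>\<^sup>+w. \<integral>\<^sup>+z. f (z,w) \<partial>distr M S Z \<partial>distr M T W)"
    using W.nn_integral_fst[of f] P.nn_integral_snd[of f] by simp_all
qed

lemma sfsub_vimage:
  assumes "prob_space M" "f \<in> measurable M N"
  shows "sigma_finite_subalgebra M (vimage_algebra (space M) f N)"
proof -
  interpret prob_space M by fact
  have "subalgebra M (vimage_algebra (space M) f N)"
    unfolding subalgebra_def using assms(2)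
    by (auto simp: sets_vimage_algebra2 measurable_def)
  then interpret finite_measure_subalgebra M "vimage_algebra (space M) f N"
    by unfold_locales
  show ?thesis by (rule sigma_finite_subalgebra_axioms)
qed

locale iidmax = prob_space M for M :: "'a measure" +
  fixes X :: "nat \<Rightarrow> 'a \<Rightarrow> real"
  assumes ind: "indep_vars (\<lambda>_. borel) X {1..}"
    and ident: "\<And>k. k \<ge> 1 \<Longrightarrow> distr M borel (X k) = distr M borel (X 1)"
begin

definition "mu = distr M borel (X 1)"
definition "FF y = measure mu {..y}"
definition "Fm y = measure mu {..<y}"
definition "V K \<omega> = restrict (\<lambda>l. X l \<omega>) K"
definition "Y = run_max X"

lemma Xm[measurable]: "k \<ge> 1 \<Longrightarrow> X k \<in> borel_measurable M"
  using ind by (auto simp: indep_vars_def)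

lemma mu_prob: "prob_space mu"
  unfolding mu_def by (rule prob_space_distr) simp

lemma sets_mu[simp, measurable_cong]: "sets mu = sets borel"
  by (simp add: mu_def)

lemma space_mu[simp]: "space mu = UNIV"
  by (simp add: mu_def)

lemma distrX: "k \<ge> 1 \<Longrightarrow> distr M borel (X k) = mu"
  unfolding mu_def by (rule ident)

lemma Vm[measurable]: "K \<subseteq> {1..} \<Longrightarrow> V K \<in> measurable M (PiM K (\<lambda>_. borel))"
  unfolding V_def by (intro measurable_restrict) auto

lemma indepV: "A \<inter> B = {} \<Longrightarrow> A \<subseteq> {1..} \<Longrightarrow> B \<subseteq> {1..} \<Longrightarrow>
   indep_var (PiM A (\<lambda>_. borel)) (V A) (PiM B (\<lambda>_. borel)) (V B)"
  unfolding V_def[abs_def] by (rule indep_var_restrict[OF ind])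

definition mx :: "nat set \<Rightarrow> (nat \<Rightarrow> real) \<Rightarrow> real" where
  "mx K v = Max (v ` K)"

lemma mx_m[measurable]: "finite K \<Longrightarrow> K' \<subseteq> K \<Longrightarrow> mx K' \<in> borel_measurable (PiM K (\<lambda>_. borel))"
  unfolding mx_def using finite_subset[of K' K]
  by (intro borel_measurable_Max) (auto intro!: measurable_component_singleton)

lemma Y_V: "k \<le> j \<Longrightarrow> Y k \<omega> = mx {1..k} (V {1..j} \<omega>)"
  unfolding Y_def run_max_def mx_def V_def by (intro arg_cong[where f=Max]) auto

lemma Ym[measurable]: "Y k \<in> borel_measurable M"
  unfolding Y_def run_max_def by (intro borel_measurable_Max) (auto simp: Xm)

lemma Y_Suc: "1 \<le> k \<Longrightarrow> Y (Suc k) \<omega> = max (Y k \<omega>) (X (Suc k) \<omega>)"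
proof -
  assume "1 \<le> k"
  then have "{1..Suc k} = insert (Suc k) {1..k}" "{1..k} \<noteq> {}" by auto
  then show ?thesis unfolding Y_def run_max_def
    by (simp add: max.commute)
qed

lemma Y_1: "Y 1 \<omega> = X 1 \<omega>"
  unfolding Y_def run_max_def by simp

lemma Y_split: "1 \<le> k \<Longrightarrow> k < j \<Longrightarrow> Y j \<omega> = max (Y k \<omega>) (mx {k+1..j} (V {k+1..j} \<omega>))"
proof -
  assume a: "1 \<le> k" "k < j"
  then have "{1..j} = {1..k} \<union> {k+1..j}" "{1..k} \<noteq> {}" "{k+1..j} \<noteq> {}" by auto
  then show ?thesis unfolding Y_def run_max_def mx_def V_def
    by (simp add: Max_Un image_Un)
qed

lemma Y_le: "1 \<le> k \<Longrightarrow> Y k \<omega> \<le> Y (Suc k) \<omega>"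
  by (simp add: Y_Suc)

lemma indep_Y_X: "1 \<le> k \<Longrightarrow> indep_var borel (Y k) borel (X (Suc k))"
proof -
  assume "1 \<le> k"
  have "indep_var borel (mx {1..k} \<circ> V {1..k}) borel ((\<lambda>v. v (Suc k)) \<circ> V {Suc k})"
    by (rule indep_var_compose[OF indepV]) (auto intro!: measurable_component_singleton)
  moreover have "mx {1..k} \<circ> V {1..k} = Y k" "((\<lambda>v. v (Suc k)) \<circ> V {Suc k}) = X (Suc k)"
    using Y_V[of k k] by (auto simp: V_def)
  ultimately show ?thesis by simp
qed

end

sublocale iidmax \<subseteq> mu: prob_space mu by (rule mu_prob)

context iidmax begin

lemma FF_mono: "mono FF"
  unfolding FF_def mono_def by (auto intro!: mu.finite_measure_mono)

lemma Fm_mono: "mono Fm"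
  unfolding Fm_def mono_def by (auto intro!: mu.finite_measure_mono)

lemma FF_m[measurable]: "FF \<in> borel_measurable borel"
  by (rule borel_measurable_mono[OF FF_mono])

lemma Fm_m[measurable]: "Fm \<in> borel_measurable borel"
  by (rule borel_measurable_mono[OF Fm_mono])

lemma FF_nn[simp]: "0 \<le> FF y" and Fm_nn[simp]: "0 \<le> Fm y"
  by (simp_all add: FF_def Fm_def)

lemma FF_le1: "FF y \<le> 1" and Fm_le1: "Fm y \<le> 1"
  by (simp_all add: FF_def Fm_def)

lemma emeasure_X: "k \<ge> 1 \<Longrightarrow> B \<in> sets borel \<Longrightarrow> emeasure M (X k -` B \<inter> space M) = emeasure mu B"
proof -
  assume a: "k \<ge> 1" "B \<in> sets borel"
  have "emeasure mu B = emeasure (distr M borel (X k)) B" using distrX[OF a(1)] by simp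
  also have "\<dots> = emeasure M (X k -` B \<inter> space M)" using a by (intro emeasure_distr) (auto simp: Xm)
  finally show ?thesis by simp
qed

lemma left_lim_FF: "left_lim FF y = Fm y"
  unfolding left_lim_def
proof (rule tendsto_Lim)
  show "\<not> trivial_limit (at_left y)" by simp
  show "(FF \<longlongrightarrow> Fm y) (at_left y)"
  proof (rule tendsto_at_left_sequentially[of "y - 1"])
    fix S :: "nat \<Rightarrow> real" assume S: "\<And>n. S n < y" "incseq S" "S \<longlonglongrightarrow> y"
    have U: "(\<Union>n. {..S n}) = {..<y}"
    proof (auto simp: S(1) less_imp_le)
      fix x assume "x < y"
      then have "eventually (\<lambda>n. x < S n) sequentially"
        using S(3) by (simp add: order_tendsto_iff)
      then obtain n where "x < S n" by (auto dest: eventually_happens)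
      then show "\<exists>n. x \<le> S n" by (auto intro: less_imp_le)
    next
      fix x n assume "x \<le> S n" then show "x < y" using S(1)[of n] by linarith
    qed
    have "(\<lambda>n. measure mu {..S n}) \<longlonglongrightarrow> measure mu (\<Union>n. {..S n})"
      by (rule mu.finite_Lim_measure_incseq) (auto simp: incseq_def intro: order_trans monoD[OF S(2)])
    then show "(\<lambda>n. FF (S n)) \<longlonglongrightarrow> Fm y" unfolding FF_def Fm_def U .
  qed simp
qed

end

context iidmax begin

lemma prob_X: "k \<ge> 1 \<Longrightarrow> B \<in> sets borel \<Longrightarrow> prob (X k -` B \<inter> space M) = measure mu B"
  by (simp add: measure_def emeasure_X)

lemma cdf_Y: "1 \<le> k \<Longrightarrow> prob {\<omega>\<in>space M. Y k \<omega> \<le> x} = FF x ^ k"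
proof (induction k rule: dec_induct)
  case base
  have "{\<omega>\<in>space M. Y 1 \<omega> \<le> x} = X 1 -` {..x} \<inter> space M" by (auto simp: Y_def run_max_def)
  then show ?case by (simp add: prob_X FF_def)
next
  case (step k)
  have "{\<omega>\<in>space M. Y (Suc k) \<omega> \<le> x} = (\<lambda>\<omega>. (Y k \<omega>, X (Suc k) \<omega>)) -` ({..x} \<times> {..x}) \<inter> space M"
    using step(1) by (auto simp: Y_Suc)
  then have "prob {\<omega>\<in>space M. Y (Suc k) \<omega> \<le> x} = prob (Y k -` {..x} \<inter> space M) * prob (X (Suc k) -` {..x} \<inter> space M)"
    using indep_varD[OF indep_Y_X[OF step(1)], of "{..x}" "{..x}"] by simp
  also have "prob (Y k -` {..x} \<inter> space M) = FF x ^ k"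
    using step(3) by (simp add: vimage_def Int_def conj_commute)
  also have "prob (X (Suc k) -` {..x} \<inter> space M) = FF x"
    by (simp add: prob_X FF_def)
  finally show ?case by simp
qed

lemma emeasure_cdf_Y: "1 \<le> k \<Longrightarrow> emeasure M (Y k -` {..x} \<inter> space M) = ennreal (FF x ^ k)"
proof -
  assume k: "1 \<le> k"
  have "Y k -` {..x} \<inter> space M = {\<omega>\<in>space M. Y k \<omega> \<le> x}" by auto
  then show ?thesis using cdf_Y[OF k, of x] by (simp add: emeasure_eq_measure)
qed

definition h :: "nat \<Rightarrow> real \<Rightarrow> real" where
  "h n t = (\<Sum>l=0..n. FF t ^ l * Fm t ^ (n - l))"

lemma h_m[measurable]: "h n \<in> borel_measurable borel"
  unfolding h_def[abs_def] by measurable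

lemma h_nn: "0 \<le> h n t"
  unfolding h_def by (intro sum_nonneg) auto

lemma h_Suc: "h (Suc n) t = FF t ^ Suc n + Fm t * h n t"
  unfolding h_def by (simp add: sum_distrib_left Suc_diff_le mult.left_commute)

lemma nn_ind: "Z \<in> borel_measurable M \<Longrightarrow> B \<in> sets borel \<Longrightarrow>
  (\<integral>\<^sup>+\<omega>. indicator B (Z \<omega>) \<partial>M) = emeasure M (Z -` B \<inter> space M)"
proof -
  assume [measurable]: "Z \<in> borel_measurable M" "B \<in> sets borel"
  have "(\<integral>\<^sup>+\<omega>. indicator B (Z \<omega>) \<partial>M) = (\<integral>\<^sup>+\<omega>. indicator (Z -` B \<inter> space M) \<omega> \<partial>M)"
    by (intro nn_integral_cong) (auto simp: indicator_def)
  also have "\<dots> = emeasure M (Z -` B \<inter> space M)"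
    by (intro nn_integral_indicator) measurable
  finally show ?thesis .
qed

lemma law_Y: "distr M borel (Y (Suc n)) = density mu (\<lambda>t. ennreal (h n t))"
proof (induction n)
  case 0
  have "Y (Suc 0) = X 1" by (auto simp: Y_def run_max_def)
  then show ?case by (simp add: h_def mu_def density_1)
next
  case (Suc n)
  show ?case
  proof (rule measure_eqI)
    show "sets (distr M borel (Y (Suc (Suc n)))) = sets (density mu (\<lambda>t. ennreal (h (Suc n) t)))" by simp
    fix B assume "B \<in> sets (distr M borel (Y (Suc (Suc n))))"
    then have B[measurable]: "B \<in> sets borel" by simp
    let ?Z = "Y (Suc n)" and ?W = "X (Suc (Suc n))"
    have ind: "indep_var borel ?Z borel ?W" by (rule indep_Y_X) simp
    have dW: "distr M borel ?W = mu" by (rule distrX) simp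
    define f1 where "f1 = (\<lambda>p::real\<times>real. indicator B (snd p) * indicator {(z,w). z \<le> w} p :: ennreal)"
    define f2 where "f2 = (\<lambda>p::real\<times>real. indicator B (fst p) * indicator {(z,w). w < z} p :: ennreal)"
    have [measurable]: "f1 \<in> borel_measurable (borel \<Otimes>\<^sub>M borel)" "f2 \<in> borel_measurable (borel \<Otimes>\<^sub>M borel)"
      unfolding f1_def f2_def by measurable
    have "emeasure (distr M borel (Y (Suc (Suc n)))) B = (\<integral>\<^sup>+\<omega>. indicator B (Y (Suc (Suc n)) \<omega>) \<partial>M)"
      by (simp add: emeasure_distr nn_ind)
    also have "\<dots> = (\<integral>\<^sup>+\<omega>. f1 (?Z \<omega>, ?W \<omega>) + f2 (?Z \<omega>, ?W \<omega>) \<partial>M)"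
      by (intro nn_integral_cong) (auto simp: Y_Suc f1_def f2_def indicator_def max_def)
    also have "\<dots> = (\<integral>\<^sup>+\<omega>. f1 (?Z \<omega>, ?W \<omega>) \<partial>M) + (\<integral>\<^sup>+\<omega>. f2 (?Z \<omega>, ?W \<omega>) \<partial>M)"
      by (intro nn_integral_add) simp_all
    also have "(\<integral>\<^sup>+\<omega>. f1 (?Z \<omega>, ?W \<omega>) \<partial>M) = (\<integral>\<^sup>+w. \<integral>\<^sup>+z. f1 (z,w) \<partial>distr M borel ?Z \<partial>mu)"
      using indep_fubini(2)[OF ind, of f1] dW by simp
    also have "\<dots> = (\<integral>\<^sup>+w. ennreal (FF w ^ Suc n) * indicator B w \<partial>mu)"
    proof (intro nn_integral_cong)
      fix w
      have "(\<integral>\<^sup>+z. f1 (z,w) \<partial>distr M borel ?Z) = (\<integral>\<^sup>+z. indicator B w * indicator {..w} z \<partial>distr M borel ?Z)"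
        by (intro nn_integral_cong) (auto simp: f1_def indicator_def)
      also have "\<dots> = indicator B w * emeasure (distr M borel ?Z) {..w}"
        by (simp add: nn_integral_cmult)
      also have "emeasure (distr M borel ?Z) {..w} = ennreal (FF w ^ Suc n)"
        by (simp add: emeasure_distr emeasure_cdf_Y)
      finally show "(\<integral>\<^sup>+z. f1 (z,w) \<partial>distr M borel ?Z) = ennreal (FF w ^ Suc n) * indicator B w"
        by (simp add: mult.commute)
    qed
    also have "(\<integral>\<^sup>+\<omega>. f2 (?Z \<omega>, ?W \<omega>) \<partial>M) = (\<integral>\<^sup>+z. \<integral>\<^sup>+w. f2 (z,w) \<partial>mu \<partial>distr M borel ?Z)"
      using indep_fubini(1)[OF ind, of f2] dW by simp
    also have "\<dots> = (\<integral>\<^sup>+z. indicator B z * ennreal (Fm z) \<partial>distr M borel ?Z)"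
    proof (intro nn_integral_cong)
      fix z
      have "(\<integral>\<^sup>+w. f2 (z,w) \<partial>mu) = (\<integral>\<^sup>+w. indicator B z * indicator {..<z} w \<partial>mu)"
        by (intro nn_integral_cong) (auto simp: f2_def indicator_def)
      also have "\<dots> = indicator B z * ennreal (Fm z)"
        by (simp add: nn_integral_cmult Fm_def mu.emeasure_eq_measure)
      finally show "(\<integral>\<^sup>+w. f2 (z,w) \<partial>mu) = indicator B z * ennreal (Fm z)" .
    qed
    also have "\<dots> = (\<integral>\<^sup>+z. ennreal (h n z) * (indicator B z * ennreal (Fm z)) \<partial>mu)"
      unfolding Suc.IH by (simp add: nn_integral_density)
    also have "(\<integral>\<^sup>+w. ennreal (FF w ^ Suc n) * indicator B w \<partial>mu) + \<dots> =
       (\<integral>\<^sup>+w. ennreal (FF w ^ Suc n) * indicator B w + ennreal (h n w) * (indicator B w * ennreal (Fm w)) \<partial>mu)"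
      by (intro nn_integral_add[symmetric]) auto
    also have "\<dots> = (\<integral>\<^sup>+w. ennreal (h (Suc n) w) * indicator B w \<partial>mu)"
      by (intro nn_integral_cong)
        (auto simp: h_Suc indicator_def ennreal_mult'[symmetric] ennreal_plus[symmetric] h_nn mult.commute simp del: ennreal_plus)
    also have "\<dots> = emeasure (density mu (\<lambda>t. ennreal (h (Suc n) t))) B"
      by (simp add: emeasure_density)
    finally show "emeasure (distr M borel (Y (Suc (Suc n)))) B = emeasure (density mu (\<lambda>t. ennreal (h (Suc n) t))) B" .
  qed
qed

end

context iidmax begin

definition gx :: "nat \<Rightarrow> real \<Rightarrow> real \<Rightarrow> real" where
  "gx i x s = (if s \<le> x then 1 else FF x ^ i / h i s)"

lemma gx_m[measurable]: "gx i x \<in> borel_measurable borel"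
  unfolding gx_def[abs_def] by measurable

lemma gx_nn: "0 \<le> gx i x s"
  unfolding gx_def using h_nn[of i s] by auto

lemma h_ge: "FF t ^ i \<le> h i t"
proof -
  have "FF t ^ i * Fm t ^ (i - i) \<le> h i t"
    unfolding h_def by (rule member_le_sum) auto
  then show ?thesis by simp
qed

lemma iiA:
  assumes i: "1 \<le> i" and B[measurable]: "B \<in> sets borel"
  shows "(\<integral>\<^sup>+\<omega>. indicator B (Y (Suc i) \<omega>) * indicator {..x} (Y i \<omega>) \<partial>M)
       = (\<integral>\<^sup>+\<omega>. indicator B (Y (Suc i) \<omega>) * ennreal (gx i x (Y (Suc i) \<omega>)) \<partial>M)"
proof -
  let ?Z = "Y i" and ?W = "X (Suc i)" and ?Y = "Y (Suc i)"
  define B1 where "B1 = B \<inter> {..x}"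
  define B2 where "B2 = B \<inter> {x<..}"
  have [measurable]: "B1 \<in> sets borel" "B2 \<in> sets borel" unfolding B1_def B2_def by auto
  have ind: "indep_var borel ?Z borel ?W" by (rule indep_Y_X[OF i])
  have dW: "distr M borel ?W = mu" by (rule distrX) simp
  have "(\<integral>\<^sup>+\<omega>. indicator B (?Y \<omega>) * indicator {..x} (?Z \<omega>) \<partial>M)
      = (\<integral>\<^sup>+\<omega>. indicator B1 (?Y \<omega>) + indicator {..x} (?Z \<omega>) * indicator B2 (?W \<omega>) \<partial>M)"
  proof (intro nn_integral_cong)
    fix \<omega>
    have "?Z \<omega> \<le> ?Y \<omega>" using Y_le[OF i] by simp
    moreover have "?Y \<omega> = max (?Z \<omega>) (?W \<omega>)" using Y_Suc[OF i] by simp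
    ultimately show "indicator B (?Y \<omega>) * indicator {..x} (?Z \<omega>) = (indicator B1 (?Y \<omega>) + indicator {..x} (?Z \<omega>) * indicator B2 (?W \<omega>) :: ennreal)"
      unfolding B1_def B2_def by (auto simp: indicator_def max_def)
  qed
  also have "\<dots> = (\<integral>\<^sup>+\<omega>. indicator B1 (?Y \<omega>) \<partial>M) + (\<integral>\<^sup>+\<omega>. indicator {..x} (?Z \<omega>) * indicator B2 (?W \<omega>) \<partial>M)"
    by (intro nn_integral_add) auto
  also have "(\<integral>\<^sup>+\<omega>. indicator {..x} (?Z \<omega>) * indicator B2 (?W \<omega>) \<partial>M)
     = (\<integral>\<^sup>+z. \<integral>\<^sup>+w. indicator {..x} z * indicator B2 w \<partial>mu \<partial>distr M borel ?Z)"
    using indep_fubini(1)[OF ind, of "\<lambda>p. indicator {..x} (fst p) * indicator B2 (snd p)"] dW by simp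
  also have "\<dots> = (\<integral>\<^sup>+z. indicator {..x} z * emeasure mu B2 \<partial>distr M borel ?Z)"
    by (simp add: nn_integral_cmult)
  also have "\<dots> = emeasure (distr M borel ?Z) {..x} * emeasure mu B2"
    by (simp add: nn_integral_multc)
  also have "\<dots> = ennreal (FF x ^ i) * emeasure mu B2"
    using i by (simp add: emeasure_distr emeasure_cdf_Y)
  finally have L: "(\<integral>\<^sup>+\<omega>. indicator B (?Y \<omega>) * indicator {..x} (?Z \<omega>) \<partial>M) =
     (\<integral>\<^sup>+\<omega>. indicator B1 (?Y \<omega>) \<partial>M) + ennreal (FF x ^ i) * emeasure mu B2" .
  have "(\<integral>\<^sup>+\<omega>. indicator B (?Y \<omega>) * ennreal (gx i x (?Y \<omega>)) \<partial>M)
     = (\<integral>\<^sup>+\<omega>. indicator B1 (?Y \<omega>) + indicator B2 (?Y \<omega>) * ennreal (FF x ^ i / h i (?Y \<omega>)) \<partial>M)"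
    by (intro nn_integral_cong) (auto simp: B1_def B2_def gx_def indicator_def)
  also have "\<dots> = (\<integral>\<^sup>+\<omega>. indicator B1 (?Y \<omega>) \<partial>M) + (\<integral>\<^sup>+\<omega>. indicator B2 (?Y \<omega>) * ennreal (FF x ^ i / h i (?Y \<omega>)) \<partial>M)"
    by (intro nn_integral_add) auto
  also have "(\<integral>\<^sup>+\<omega>. indicator B2 (?Y \<omega>) * ennreal (FF x ^ i / h i (?Y \<omega>)) \<partial>M)
      = (\<integral>\<^sup>+t. indicator B2 t * ennreal (FF x ^ i / h i t) \<partial>distr M borel ?Y)"
    by (simp add: nn_integral_distr)
  also have "\<dots> = (\<integral>\<^sup>+t. ennreal (h i t) * (indicator B2 t * ennreal (FF x ^ i / h i t)) \<partial>mu)"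
    using law_Y[of i] i by (simp add: nn_integral_density)
  also have "\<dots> = (\<integral>\<^sup>+t. ennreal (FF x ^ i) * indicator B2 t \<partial>mu)"
  proof (intro nn_integral_cong)
    fix t
    show "ennreal (h i t) * (indicator B2 t * ennreal (FF x ^ i / h i t)) = ennreal (FF x ^ i) * indicator B2 t"
    proof (cases "FF x = 0 \<or> t \<notin> B2")
      case True
      then show ?thesis using i by (auto simp: indicator_def power_0_left)
    next
      case False
      then have "x < t" "FF x > 0" using FF_nn[of x] by (auto simp: B2_def less_le)
      then have "FF x \<le> FF t" using monoD[OF FF_mono] by simp
      then have "0 < FF t ^ i" using \<open>FF x > 0\<close> by simp
      then have hp: "0 < h i t" using h_ge[of t i] by linarith
      have "ennreal (h i t) * ennreal (FF x ^ i / h i t) = ennreal (h i t * (FF x ^ i / h i t))"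
        by (rule ennreal_mult[symmetric]) (use hp in auto)
      also have "h i t * (FF x ^ i / h i t) = FF x ^ i" using hp by simp
      finally show ?thesis using False by (simp add: indicator_def)
    qed
  qed
  also have "\<dots> = ennreal (FF x ^ i) * emeasure mu B2"
    by (simp add: nn_integral_cmult)
  finally show ?thesis using L by simp
qed

end

lemma ce_nn:
  assumes G: "sigma_finite_subalgebra M G" and P: "prob_space M" and S[measurable]: "S \<in> sets M"
    and g[measurable]: "g \<in> borel_measurable G" and gnn: "\<And>\<omega>. 0 \<le> g \<omega>"
    and eq: "\<And>A. A \<in> sets G \<Longrightarrow> (\<integral>\<^sup>+\<omega>. indicator A \<omega> * indicator S \<omega> \<partial>M) = (\<integral>\<^sup>+\<omega>. indicator A \<omega> * ennreal (g \<omega>) \<partial>M)"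
  shows "AE \<omega> in M. cond_prob M G S \<omega> = g \<omega>"
proof -
  interpret sigma_finite_subalgebra M G by fact
  interpret prob_space M by fact
  have gM[measurable]: "g \<in> borel_measurable M" by (rule measurable_from_subalg[OF subalg g])
  have spG: "space G = space M" using subalg by (simp add: subalgebra_def)
  have sG: "A \<in> sets G \<Longrightarrow> A \<in> sets M" for A using subalg by (auto simp: subalgebra_def)
  have intS: "integrable M (indicator S :: 'a \<Rightarrow> real)"
    by (rule integrable_real_indicator) (auto simp: S emeasure_eq_measure)
  have "(\<integral>\<^sup>+\<omega>. ennreal (g \<omega>) \<partial>M) = (\<integral>\<^sup>+\<omega>. indicator (space M) \<omega> * ennreal (g \<omega>) \<partial>M)"
    by (intro nn_integral_cong) simp
  also have "\<dots> = (\<integral>\<^sup>+\<omega>. indicator (space M) \<omega> * indicator S \<omega> \<partial>M)"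
    using eq[of "space M"] spG by (metis sets.top)
  also have "\<dots> \<le> (\<integral>\<^sup>+\<omega>. 1 \<partial>M)"
    by (intro nn_integral_mono) (auto simp: indicator_def)
  also have "\<dots> < \<infinity>" by (simp add: emeasure_space_1)
  finally have intg: "integrable M g"
    by (intro integrableI_nonneg) (auto simp: gnn)
  have "AE \<omega> in M. real_cond_exp M G (indicator S) \<omega> = g \<omega>"
  proof (rule real_cond_exp_charact[OF _ intS intg g])
    fix A assume A: "A \<in> sets G"
    then have [measurable]: "A \<in> sets M" by (rule sG)
    have "(\<integral> x \<in> A. (indicator S x :: real) \<partial>M) = (\<integral> x. indicator A x * indicator S x \<partial>M)"
      unfolding set_lebesgue_integral_def by (intro Bochner_Integration.integral_cong) (auto simp: indicator_def)
    also have "\<dots> = enn2real (\<integral>\<^sup>+x. ennreal (indicator A x * indicator S x) \<partial>M)"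
      by (rule integral_eq_nn_integral) auto
    also have "(\<integral>\<^sup>+x. ennreal (indicator A x * indicator S x) \<partial>M) = (\<integral>\<^sup>+\<omega>. indicator A \<omega> * indicator S \<omega> \<partial>M)"
      by (intro nn_integral_cong) (auto simp: indicator_def)
    also have "\<dots> = (\<integral>\<^sup>+\<omega>. indicator A \<omega> * ennreal (g \<omega>) \<partial>M)" by (rule eq[OF A])
    also have "\<dots> = (\<integral>\<^sup>+x. ennreal (indicator A x * g x) \<partial>M)"
      by (intro nn_integral_cong) (auto simp: indicator_def)
    also have "enn2real \<dots> = (\<integral> x. indicator A x * g x \<partial>M)"
      by (rule integral_eq_nn_integral[symmetric]) (auto simp: gnn)
    also have "\<dots> = (\<integral> x \<in> A. g x \<partial>M)"
      unfolding set_lebesgue_integral_def by (intro Bochner_Integration.integral_cong) (auto simp: indicator_def)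
    finally show "(\<integral> x \<in> A. (indicator S x :: real) \<partial>M) = (\<integral> x \<in> A. g x \<partial>M)" .
  qed
  then show ?thesis unfolding cond_prob_def .
qed

lemma sets_vimage_sub:
  assumes "f \<in> measurable H N" "space H = space M"
  shows "sets (vimage_algebra (space M) f N) \<subseteq> sets H"
proof -
  have "f \<in> space M \<rightarrow> space N" using assms by (auto simp: measurable_def)
  then show ?thesis using assms
    by (auto simp: sets_vimage_algebra2 dest: measurable_sets)
qed

context iidmax begin

definition "H j = vimage_algebra (space M) (V {1..j}) (PiM {1..j} (\<lambda>_. borel))"

definition "phi B t = (\<integral>\<^sup>+x. indicator B (max t x) \<partial>mu)"

lemma space_H[simp]: "space (H j) = space M" by (simp add: H_def)

lemma V_H[measurable]: "V {1..j} \<in> measurable (H j) (PiM {1..j} (\<lambda>_. borel))"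
  unfolding H_def by (rule measurable_vimage_algebra1) (use measurable_space[OF Vm[of "{1..j}"]] in auto)

lemma Y_H: "k \<le> j \<Longrightarrow> Y k \<in> borel_measurable (H j)"
proof -
  assume k: "k \<le> j"
  have [measurable]: "mx {1..k} \<in> borel_measurable (PiM {1..j} (\<lambda>_. borel))" by (rule mx_m) (use k in auto)
  have "(\<lambda>\<omega>. mx {1..k} (V {1..j} \<omega>)) \<in> borel_measurable (H j)" by measurable
  moreover have "Y k = (\<lambda>\<omega>. mx {1..k} (V {1..j} \<omega>))" using Y_V[OF k] by auto
  ultimately show ?thesis by simp
qed

lemma phi_m[measurable]: "B \<in> sets borel \<Longrightarrow> phi B \<in> borel_measurable borel"
proof -
  assume B: "B \<in> sets borel"
  have m: "(\<lambda>p::real\<times>real. max (fst p) (snd p)) \<in> borel_measurable (borel \<Otimes>\<^sub>M borel)" by measurable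
  have "(\<lambda>p::real\<times>real. indicator B (max (fst p) (snd p)) :: ennreal) \<in> borel_measurable (borel \<Otimes>\<^sub>M borel)"
    by (rule measurable_compose[OF m]) (rule borel_measurable_indicator[OF B])
  then show ?thesis
    unfolding phi_def[abs_def] by (intro mu.borel_measurable_nn_integral) (simp add: case_prod_beta')
qed

lemma phi_le: "phi B t \<le> 1"
proof -
  have "phi B t \<le> (\<integral>\<^sup>+x. 1 \<partial>mu)" unfolding phi_def by (intro nn_integral_mono) (auto simp: indicator_def)
  then show ?thesis using mu.emeasure_space_1 by simp
qed

lemma distr_single:
  assumes k: "1 \<le> k" and g[measurable]: "g \<in> borel_measurable borel"
  shows "(\<integral>\<^sup>+u. g (u k) \<partial>distr M (PiM {k} (\<lambda>_. borel)) (V {k})) = (\<integral>\<^sup>+x. g x \<partial>mu)"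
proof -
  have [measurable]: "(\<lambda>u. u k) \<in> borel_measurable (PiM {k} (\<lambda>_. borel))"
    by (rule measurable_component_singleton) simp
  have "(\<integral>\<^sup>+u. g (u k) \<partial>distr M (PiM {k} (\<lambda>_. borel)) (V {k})) = (\<integral>\<^sup>+\<omega>. g (V {k} \<omega> k) \<partial>M)"
    using k by (simp add: nn_integral_distr)
  also have "\<dots> = (\<integral>\<^sup>+\<omega>. g (X k \<omega>) \<partial>M)" by (simp add: V_def)
  also have "\<dots> = (\<integral>\<^sup>+x. g x \<partial>distr M borel (X k))" using k by (simp add: nn_integral_distr)
  finally show ?thesis using distrX[OF k] by simp
qed

lemma keyK:
  assumes j: "1 \<le> j" and B[measurable]: "B \<in> sets borel" and E: "E \<in> sets (H j)"
  shows "(\<integral>\<^sup>+\<omega>. indicator E \<omega> * indicator B (Y (Suc j) \<omega>) \<partial>M) = (\<integral>\<^sup>+\<omega>. indicator E \<omega> * phi B (Y j \<omega>) \<partial>M)"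
proof -
  let ?P = "PiM {1..j} (\<lambda>_. borel::real measure)"
  have Vsp: "V {1..j} \<in> space M \<rightarrow> space ?P" using measurable_space[OF Vm[of "{1..j}"]] by auto
  obtain D where D[measurable]: "D \<in> sets ?P" and ED: "E = V {1..j} -` D \<inter> space M"
    using E Vsp unfolding H_def by (auto simp: sets_vimage_algebra2)
  have [measurable]: "mx {1..j} \<in> borel_measurable ?P" by (rule mx_m) auto
  let ?Q = "PiM {Suc j} (\<lambda>_. borel::real measure)"
  have [measurable]: "(\<lambda>u. u (Suc j)) \<in> borel_measurable ?Q"
    by (rule measurable_component_singleton) simp
  define f where "f = (\<lambda>p. indicator D (fst p) * indicator B (max (mx {1..j} (fst p)) (snd p (Suc j))) :: ennreal)"
  have [measurable]: "f \<in> borel_measurable (?P \<Otimes>\<^sub>M ?Q)" unfolding f_def by measurable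
  have ind: "indep_var ?P (V {1..j}) ?Q (V {Suc j})" by (rule indepV) auto
  have "(\<integral>\<^sup>+\<omega>. indicator E \<omega> * indicator B (Y (Suc j) \<omega>) \<partial>M) = (\<integral>\<^sup>+\<omega>. f (V {1..j} \<omega>, V {Suc j} \<omega>) \<partial>M)"
    by (intro nn_integral_cong) (simp add: ED f_def Y_Suc[OF j] Y_V[of j j] indicator_def V_def)
  also have "\<dots> = (\<integral>\<^sup>+v. \<integral>\<^sup>+w. f (v, w) \<partial>distr M ?Q (V {Suc j}) \<partial>distr M ?P (V {1..j}))"
    by (rule indep_fubini(1)[OF ind]) measurable
  also have "\<dots> = (\<integral>\<^sup>+v. indicator D v * phi B (mx {1..j} v) \<partial>distr M ?P (V {1..j}))"
  proof (intro nn_integral_cong)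
    fix v
    have "(\<integral>\<^sup>+w. f (v, w) \<partial>distr M ?Q (V {Suc j})) = (\<integral>\<^sup>+w. (\<lambda>x. indicator D v * indicator B (max (mx {1..j} v) x)) (w (Suc j)) \<partial>distr M ?Q (V {Suc j}))"
      by (simp add: f_def)
    also have "\<dots> = (\<integral>\<^sup>+x. indicator D v * indicator B (max (mx {1..j} v) x) \<partial>mu)"
    proof (rule distr_single)
      have m: "(\<lambda>x::real. max (mx {1..j} v) x) \<in> borel_measurable borel" by simp
      show "(\<lambda>x. indicator D v * indicator B (max (mx {1..j} v) x) :: ennreal) \<in> borel_measurable borel"
        by (intro borel_measurable_times_ennreal borel_measurable_const measurable_compose[OF m] borel_measurable_indicator B)
    qed simp
    moreover have "(\<lambda>x. indicator B (max (mx {1..j} v) x) :: ennreal) \<in> borel_measurable mu"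
    proof -
      have m: "(\<lambda>x::real. max (mx {1..j} v) x) \<in> borel_measurable borel" by simp
      have "(\<lambda>x. indicator B (max (mx {1..j} v) x) :: ennreal) \<in> borel_measurable borel"
        by (intro measurable_compose[OF m] borel_measurable_indicator B)
      then show ?thesis by (simp only: measurable_cong_sets[OF sets_mu refl])
    qed
    ultimately show "(\<integral>\<^sup>+w. f (v, w) \<partial>distr M ?Q (V {Suc j})) = indicator D v * phi B (mx {1..j} v)"
      by (simp add: phi_def nn_integral_cmult)
  qed
  also have "\<dots> = (\<integral>\<^sup>+\<omega>. indicator D (V {1..j} \<omega>) * phi B (mx {1..j} (V {1..j} \<omega>)) \<partial>M)"
    by (rule nn_integral_distr; measurable)
  also have "\<dots> = (\<integral>\<^sup>+\<omega>. indicator E \<omega> * phi B (Y j \<omega>) \<partial>M)"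
    by (intro nn_integral_cong) (simp add: ED Y_V[of j j] indicator_def)
  finally show ?thesis .
qed

end

context iidmax begin

lemma H_sub: "subalgebra M (H j)"
  using sets_vimage_sub[OF Vm[of "{1..j}"] refl] by (auto simp: subalgebra_def H_def)

lemma meas_H_M: "f \<in> measurable (H j) N \<Longrightarrow> f \<in> measurable M N"
  by (rule measurable_from_subalg[OF H_sub])

lemma sfsub: "f \<in> measurable M N \<Longrightarrow> sigma_finite_subalgebra M (vimage_algebra (space M) f N)"
  by (rule sfsub_vimage[OF prob_space_axioms])

lemma phi_fin: "ennreal (enn2real (phi B t)) = phi B t"
proof -
  have "phi B t < \<top>" using phi_le[of B t] by (metis ennreal_1 ennreal_less_top le_less_trans)
  then show ?thesis by simp
qed

lemma markov:
  assumes j: "1 \<le> j" and B[measurable]: "B \<in> sets borel" and Wf: "Wf \<in> measurable (H j) N"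
    and gm: "(\<lambda>\<omega>. enn2real (phi B (Y j \<omega>))) \<in> borel_measurable (vimage_algebra (space M) Wf N)"
  shows "AE \<omega> in M. cond_prob M (vimage_algebra (space M) Wf N) (Y (Suc j) -` B \<inter> space M) \<omega> = enn2real (phi B (Y j \<omega>))"
proof (rule ce_nn[OF sfsub[OF meas_H_M[OF Wf]] prob_space_axioms _ gm])
  show "Y (Suc j) -` B \<inter> space M \<in> sets M" by measurable
  show "0 \<le> enn2real (phi B (Y j \<omega>))" for \<omega> by simp
  fix A assume "A \<in> sets (vimage_algebra (space M) Wf N)"
  then have A: "A \<in> sets (H j)" using sets_vimage_sub[OF Wf space_H] by auto
  have "(\<integral>\<^sup>+\<omega>. indicator A \<omega> * indicator (Y (Suc j) -` B \<inter> space M) \<omega> \<partial>M) =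
     (\<integral>\<^sup>+\<omega>. indicator A \<omega> * indicator B (Y (Suc j) \<omega>) \<partial>M)"
    by (intro nn_integral_cong) (auto simp: indicator_def)
  also have "\<dots> = (\<integral>\<^sup>+\<omega>. indicator A \<omega> * phi B (Y j \<omega>) \<partial>M)" by (rule keyK[OF j B A])
  finally show "(\<integral>\<^sup>+\<omega>. indicator A \<omega> * indicator (Y (Suc j) -` B \<inter> space M) \<omega> \<partial>M) =
     (\<integral>\<^sup>+\<omega>. indicator A \<omega> * ennreal (enn2real (phi B (Y j \<omega>))) \<partial>M)" by (simp add: phi_fin)
qed

lemma phi_atMost: "phi {..y} t = ennreal (FF y) * indicator {..y} t"
proof -
  have "phi {..y} t = (\<integral>\<^sup>+x. indicator {..y} t * indicator {..y} x \<partial>mu)"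
    unfolding phi_def by (intro nn_integral_cong) (auto simp: indicator_def)
  also have "\<dots> = indicator {..y} t * emeasure mu {..y}" by (simp add: nn_integral_cmult)
  finally show ?thesis by (simp add: FF_def mu.emeasure_eq_measure mult.commute)
qed

lemma enn_phi_atMost: "enn2real (phi {..y} t) = FF y * indicator {..y} t"
  by (simp add: phi_atMost indicator_def)

lemma vimage_meas: "f \<in> measurable M N \<Longrightarrow> g \<in> measurable N K \<Longrightarrow> (\<lambda>\<omega>. g (f \<omega>)) \<in> measurable (vimage_algebra (space M) f N) K"
  by (rule measurable_compose[OF measurable_vimage_algebra1]) (auto simp: measurable_def)

end

context iidmax begin

lemma markov_atMost:
  assumes j: "1 \<le> j" and Wf: "Wf \<in> measurable (H j) N"
    and Yj: "Y j \<in> measurable (vimage_algebra (space M) Wf N) borel"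
  shows "AE \<omega> in M. cond_prob M (vimage_algebra (space M) Wf N) {\<omega> \<in> space M. Y (j+1) \<omega> \<le> y} \<omega> = FF y * indicator {\<omega>. y \<ge> Y j \<omega>} \<omega>"
proof -
  have gm: "(\<lambda>\<omega>. enn2real (phi {..y} (Y j \<omega>))) \<in> borel_measurable (vimage_algebra (space M) Wf N)"
    unfolding enn_phi_atMost using Yj by measurable
  have "{\<omega> \<in> space M. Y (j+1) \<omega> \<le> y} = Y (Suc j) -` {..y} \<inter> space M" by auto
  then show ?thesis using markov[OF j _ Wf gm]
    by (simp add: enn_phi_atMost indicator_def)
qed

lemma pair_H: "k \<le> j \<Longrightarrow> (\<lambda>\<omega>. (Y k \<omega>, Y j \<omega>)) \<in> measurable (H j) borel"
  using Y_H[of k j] Y_H[of j j] by measurable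

lemma part_i1: "1 \<le> j \<Longrightarrow> AE \<omega> in M. cond_prob M (sigma_gen M (Y j)) {\<omega> \<in> space M. Y (j+1) \<omega> \<le> y} \<omega> = FF y * indicator {\<omega>. y \<ge> Y j \<omega>} \<omega>"
  unfolding sigma_gen_def
  by (rule markov_atMost) (auto intro: Y_H measurable_vimage_algebra1)

lemma part_i2:
  assumes "1 \<le> i" "i + 1 < j"
  shows "AE \<omega> in M. cond_prob M (sigma_gen M (\<lambda>\<omega>. (Y (i+1) \<omega>, Y j \<omega>))) {\<omega> \<in> space M. Y (j+1) \<omega> \<le> y} \<omega>
        = cond_prob M (sigma_gen M (Y j)) {\<omega> \<in> space M. Y (j+1) \<omega> \<le> y} \<omega>"
proof -
  have j: "1 \<le> j" using assms by simp
  have "AE \<omega> in M. cond_prob M (sigma_gen M (\<lambda>\<omega>. (Y (i+1) \<omega>, Y j \<omega>))) {\<omega> \<in> space M. Y (j+1) \<omega> \<le> y} \<omega> = FF y * indicator {\<omega>. y \<ge> Y j \<omega>} \<omega>"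
    unfolding sigma_gen_def
  proof (rule markov_atMost[OF j pair_H])
    show "i + 1 \<le> j" using assms by simp
    have "(\<lambda>\<omega>. snd (Y (i+1) \<omega>, Y j \<omega>)) \<in> measurable (vimage_algebra (space M) (\<lambda>\<omega>. (Y (i+1) \<omega>, Y j \<omega>)) borel) borel"
      by (rule vimage_meas) (auto intro!: borel_measurable_continuous_onI continuous_intros)
    then show "Y j \<in> measurable (vimage_algebra (space M) (\<lambda>\<omega>. (Y (i+1) \<omega>, Y j \<omega>)) borel) borel" by simp
  qed
  then show ?thesis using part_i1[OF j, of y] by eventually_elim simp
qed

end

context iidmax begin

lemma part_ii1:
  assumes i: "1 \<le> i"
  shows "AE \<omega> in M. cond_prob M (sigma_gen M (Y (i+1))) {\<omega> \<in> space M. Y i \<omega> \<le> x} \<omega> = gx i x (Y (Suc i) \<omega>)"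
  unfolding sigma_gen_def Suc_eq_plus1[symmetric]
proof (rule ce_nn[OF sfsub prob_space_axioms])
  show "Y (Suc i) \<in> borel_measurable M" by simp
  show "{\<omega> \<in> space M. Y i \<omega> \<le> x} \<in> sets M" by measurable
  show "(\<lambda>\<omega>. gx i x (Y (Suc i) \<omega>)) \<in> borel_measurable (vimage_algebra (space M) (Y (Suc i)) borel)"
    by (rule vimage_meas) auto
  show "0 \<le> gx i x (Y (Suc i) \<omega>)" for \<omega> by (rule gx_nn)
  fix A assume "A \<in> sets (vimage_algebra (space M) (Y (Suc i)) borel)"
  then obtain B where B[measurable]: "B \<in> sets borel" and AB: "A = Y (Suc i) -` B \<inter> space M"
    by (auto simp: sets_vimage_algebra2)
  have "(\<integral>\<^sup>+\<omega>. indicator A \<omega> * indicator {\<omega> \<in> space M. Y i \<omega> \<le> x} \<omega> \<partial>M)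
     = (\<integral>\<^sup>+\<omega>. indicator B (Y (Suc i) \<omega>) * indicator {..x} (Y i \<omega>) \<partial>M)"
    by (intro nn_integral_cong) (auto simp: AB indicator_def)
  also have "\<dots> = (\<integral>\<^sup>+\<omega>. indicator B (Y (Suc i) \<omega>) * ennreal (gx i x (Y (Suc i) \<omega>)) \<partial>M)"
    by (rule iiA[OF i B])
  also have "\<dots> = (\<integral>\<^sup>+\<omega>. indicator A \<omega> * ennreal (gx i x (Y (Suc i) \<omega>)) \<partial>M)"
    by (intro nn_integral_cong) (auto simp: AB indicator_def)
  finally show "(\<integral>\<^sup>+\<omega>. indicator A \<omega> * indicator {\<omega> \<in> space M. Y i \<omega> \<le> x} \<omega> \<partial>M)
     = (\<integral>\<^sup>+\<omega>. indicator A \<omega> * ennreal (gx i x (Y (Suc i) \<omega>)) \<partial>M)" .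
qed

lemma split_fub:
  assumes i: "1 \<le> i" and ij: "Suc i < j" and D[measurable]: "D \<in> sets (borel :: (real \<times> real) measure)"
    and q[measurable]: "q \<in> borel_measurable (PiM {1..Suc i} (\<lambda>_. borel))"
  shows "(\<integral>\<^sup>+\<omega>. indicator D (Y (Suc i) \<omega>, Y j \<omega>) * q (V {1..Suc i} \<omega>) \<partial>M) =
    (\<integral>\<^sup>+u. (\<integral>\<^sup>+\<omega>. indicator ((\<lambda>s. (s, max s (mx {Suc i+1..j} u))) -` D) (Y (Suc i) \<omega>) * q (V {1..Suc i} \<omega>) \<partial>M)
       \<partial>distr M (PiM {Suc i+1..j} (\<lambda>_. borel)) (V {Suc i+1..j}))"
proof -
  let ?P1 = "PiM {1..Suc i} (\<lambda>_. borel::real measure)" and ?P2 = "PiM {Suc i+1..j} (\<lambda>_. borel::real measure)"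
  have [measurable]: "mx {1..Suc i} \<in> borel_measurable ?P1" by (rule mx_m) auto
  have [measurable]: "mx {Suc i+1..j} \<in> borel_measurable ?P2" by (rule mx_m) auto
  define f where "f = (\<lambda>p. indicator D (mx {1..Suc i} (fst p), max (mx {1..Suc i} (fst p)) (mx {Suc i+1..j} (snd p))) * q (fst p) :: ennreal)"
  have [measurable]: "f \<in> borel_measurable (?P1 \<Otimes>\<^sub>M ?P2)" unfolding f_def by measurable
  have ind: "indep_var ?P1 (V {1..Suc i}) ?P2 (V {Suc i+1..j})" by (rule indepV) auto
  have "(\<integral>\<^sup>+\<omega>. indicator D (Y (Suc i) \<omega>, Y j \<omega>) * q (V {1..Suc i} \<omega>) \<partial>M) = (\<integral>\<^sup>+\<omega>. f (V {1..Suc i} \<omega>, V {Suc i+1..j} \<omega>) \<partial>M)"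
    using i ij by (intro nn_integral_cong) (simp add: f_def Y_split[of "Suc i" j] Y_V[of "Suc i" "Suc i"])
  also have "\<dots> = (\<integral>\<^sup>+u. \<integral>\<^sup>+v. f (v, u) \<partial>distr M ?P1 (V {1..Suc i}) \<partial>distr M ?P2 (V {Suc i+1..j}))"
    by (rule indep_fubini(2)[OF ind]) measurable
  also have "\<dots> = (\<integral>\<^sup>+u. (\<integral>\<^sup>+\<omega>. indicator ((\<lambda>s. (s, max s (mx {Suc i+1..j} u))) -` D) (Y (Suc i) \<omega>) * q (V {1..Suc i} \<omega>) \<partial>M)
       \<partial>distr M ?P2 (V {Suc i+1..j}))"
  proof (intro nn_integral_cong)
    fix u
    let ?Du = "(\<lambda>s. (s, max s (mx {Suc i+1..j} u))) -` D"
    have m: "(\<lambda>s::real. (s, max s (mx {Suc i+1..j} u))) \<in> borel_measurable borel" by measurable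
    have [measurable]: "?Du \<in> sets borel" using measurable_sets[OF m D] by simp
    have "(\<integral>\<^sup>+v. f (v, u) \<partial>distr M ?P1 (V {1..Suc i})) = (\<integral>\<^sup>+v. indicator ?Du (mx {1..Suc i} v) * q v \<partial>distr M ?P1 (V {1..Suc i}))"
      by (intro nn_integral_cong) (simp add: f_def indicator_def)
    also have "\<dots> = (\<integral>\<^sup>+\<omega>. indicator ?Du (mx {1..Suc i} (V {1..Suc i} \<omega>)) * q (V {1..Suc i} \<omega>) \<partial>M)"
      by (rule nn_integral_distr) measurable
    also have "\<dots> = (\<integral>\<^sup>+\<omega>. indicator ((\<lambda>s. (s, max s (mx {Suc i+1..j} u))) -` D) (Y (Suc i) \<omega>) * q (V {1..Suc i} \<omega>) \<partial>M)"
      by (intro nn_integral_cong) (simp add: Y_V[of "Suc i" "Suc i"])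
    finally show "(\<integral>\<^sup>+v. f (v, u) \<partial>distr M ?P1 (V {1..Suc i})) = \<dots>" .
  qed
  finally show ?thesis .
qed

end

context iidmax begin

lemma part_ii2:
  assumes i: "1 \<le> i" and ij: "i + 1 < j"
  shows "AE \<omega> in M. cond_prob M (sigma_gen M (\<lambda>\<omega>. (Y (i+1) \<omega>, Y j \<omega>))) {\<omega> \<in> space M. Y i \<omega> \<le> x} \<omega> = gx i x (Y (Suc i) \<omega>)"
  unfolding sigma_gen_def
proof (rule ce_nn[OF sfsub[OF meas_H_M[OF pair_H]] prob_space_axioms])
  show "i + 1 \<le> j" using ij by simp
  show "{\<omega> \<in> space M. Y i \<omega> \<le> x} \<in> sets M" by measurable
  have "(\<lambda>\<omega>. (\<lambda>p. gx i x (fst p)) (Y (i+1) \<omega>, Y j \<omega>)) \<in> borel_measurable (vimage_algebra (space M) (\<lambda>\<omega>. (Y (i+1) \<omega>, Y j \<omega>)) borel)"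
  proof (rule vimage_meas[where f="\<lambda>\<omega>. (Y (i+1) \<omega>, Y j \<omega>)" and g="\<lambda>p. gx i x (fst p)"])
    show "(\<lambda>\<omega>. (Y (i+1) \<omega>, Y j \<omega>)) \<in> borel_measurable M" by measurable
    have fstm: "fst \<in> borel_measurable (borel :: (real \<times> real) measure)"
      by (auto intro!: borel_measurable_continuous_onI continuous_intros)
    show "(\<lambda>p::real\<times>real. gx i x (fst p)) \<in> borel_measurable borel" using measurable_compose[OF fstm gx_m[of i x]] by simp
  qed
  then show "(\<lambda>\<omega>. gx i x (Y (Suc i) \<omega>)) \<in> borel_measurable (vimage_algebra (space M) (\<lambda>\<omega>. (Y (i+1) \<omega>, Y j \<omega>)) borel)"
    by simp
  show "0 \<le> gx i x (Y (Suc i) \<omega>)" for \<omega> by (rule gx_nn)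
  fix A assume "A \<in> sets (vimage_algebra (space M) (\<lambda>\<omega>. (Y (i+1) \<omega>, Y j \<omega>)) borel)"
  then obtain D where D[measurable]: "D \<in> sets (borel :: (real \<times> real) measure)" and AD: "A = (\<lambda>\<omega>. (Y (i+1) \<omega>, Y j \<omega>)) -` D \<inter> space M"
    by (auto simp: sets_vimage_algebra2)
  have ij': "Suc i < j" using ij by simp
  let ?P1 = "PiM {1..Suc i} (\<lambda>_. borel::real measure)"
  have [measurable]: "mx {1..i} \<in> borel_measurable ?P1" by (rule mx_m) auto
  have [measurable]: "mx {1..Suc i} \<in> borel_measurable ?P1" by (rule mx_m) auto
  define q1 where "q1 = (\<lambda>v. indicator {..x} (mx {1..i} v) :: ennreal)"
  define q2 where "q2 = (\<lambda>v. ennreal (gx i x (mx {1..Suc i} v)))"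
  have qm[measurable]: "q1 \<in> borel_measurable ?P1" "q2 \<in> borel_measurable ?P1" unfolding q1_def q2_def by measurable
  let ?Du = "\<lambda>u. (\<lambda>s. (s, max s (mx {Suc i+1..j} u))) -` D"
  have Du: "?Du u \<in> sets borel" for u
  proof -
    have m: "(\<lambda>s::real. (s, max s (mx {Suc i+1..j} u))) \<in> borel_measurable borel" by measurable
    show ?thesis using measurable_sets[OF m D] by simp
  qed
  have "(\<integral>\<^sup>+\<omega>. indicator A \<omega> * indicator {\<omega> \<in> space M. Y i \<omega> \<le> x} \<omega> \<partial>M)
     = (\<integral>\<^sup>+\<omega>. indicator D (Y (Suc i) \<omega>, Y j \<omega>) * q1 (V {1..Suc i} \<omega>) \<partial>M)"
    by (intro nn_integral_cong) (auto simp: AD indicator_def q1_def Y_V[of i "Suc i"])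
  also have "\<dots> = (\<integral>\<^sup>+u. (\<integral>\<^sup>+\<omega>. indicator (?Du u) (Y (Suc i) \<omega>) * q1 (V {1..Suc i} \<omega>) \<partial>M)
       \<partial>distr M (PiM {Suc i+1..j} (\<lambda>_. borel)) (V {Suc i+1..j}))"
    by (rule split_fub[OF i ij' D qm(1)])
  also have "\<dots> = (\<integral>\<^sup>+u. (\<integral>\<^sup>+\<omega>. indicator (?Du u) (Y (Suc i) \<omega>) * q2 (V {1..Suc i} \<omega>) \<partial>M)
       \<partial>distr M (PiM {Suc i+1..j} (\<lambda>_. borel)) (V {Suc i+1..j}))"
  proof (rule nn_integral_cong)
    fix u
    have "(\<integral>\<^sup>+\<omega>. indicator (?Du u) (Y (Suc i) \<omega>) * q1 (V {1..Suc i} \<omega>) \<partial>M)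
        = (\<integral>\<^sup>+\<omega>. indicator (?Du u) (Y (Suc i) \<omega>) * indicator {..x} (Y i \<omega>) \<partial>M)"
      by (intro nn_integral_cong) (simp add: q1_def Y_V[of i "Suc i"])
    also have "\<dots> = (\<integral>\<^sup>+\<omega>. indicator (?Du u) (Y (Suc i) \<omega>) * ennreal (gx i x (Y (Suc i) \<omega>)) \<partial>M)"
      by (rule iiA[OF i Du])
    also have "\<dots> = (\<integral>\<^sup>+\<omega>. indicator (?Du u) (Y (Suc i) \<omega>) * q2 (V {1..Suc i} \<omega>) \<partial>M)"
      by (intro nn_integral_cong) (simp add: q2_def Y_V[of "Suc i" "Suc i"])
    finally show "(\<integral>\<^sup>+\<omega>. indicator (?Du u) (Y (Suc i) \<omega>) * q1 (V {1..Suc i} \<omega>) \<partial>M)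
        = (\<integral>\<^sup>+\<omega>. indicator (?Du u) (Y (Suc i) \<omega>) * q2 (V {1..Suc i} \<omega>) \<partial>M)" .
  qed
  also have "\<dots> = (\<integral>\<^sup>+\<omega>. indicator D (Y (Suc i) \<omega>, Y j \<omega>) * q2 (V {1..Suc i} \<omega>) \<partial>M)"
    by (rule split_fub[OF i ij' D qm(2), symmetric])
  also have "\<dots> = (\<integral>\<^sup>+\<omega>. indicator A \<omega> * ennreal (gx i x (Y (Suc i) \<omega>)) \<partial>M)"
    by (intro nn_integral_cong) (auto simp: AD indicator_def q2_def Y_V[of "Suc i" "Suc i"])
  finally show "(\<integral>\<^sup>+\<omega>. indicator A \<omega> * indicator {\<omega> \<in> space M. Y i \<omega> \<le> x} \<omega> \<partial>M)
     = (\<integral>\<^sup>+\<omega>. indicator A \<omega> * ennreal (gx i x (Y (Suc i) \<omega>)) \<partial>M)" .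
qed

end

context iidmax begin

lemma phir_le: "enn2real (phi B t) \<le> 1"
proof -
  have "enn2real (phi B t) \<le> enn2real 1" by (rule enn2real_mono[OF phi_le]) simp
  then show ?thesis by simp
qed

lemma real_keyK:
  assumes j: "1 \<le> j" and B[measurable]: "B \<in> sets borel" and E: "E \<in> sets (H j)"
  shows "(\<integral>\<omega>. indicator E \<omega> * indicator (Y (Suc j) -` B \<inter> space M) \<omega> \<partial>M) = (\<integral>\<omega>. indicator E \<omega> * enn2real (phi B (Y j \<omega>)) \<partial>M)"
proof -
  have [measurable]: "E \<in> sets M" using E H_sub by (auto simp: subalgebra_def)
  have "(\<integral>\<omega>. indicator E \<omega> * indicator (Y (Suc j) -` B \<inter> space M) \<omega> \<partial>M)
     = enn2real (\<integral>\<^sup>+\<omega>. ennreal (indicator E \<omega> * indicator (Y (Suc j) -` B \<inter> space M) \<omega>) \<partial>M)"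
    by (rule integral_eq_nn_integral) auto
  also have "(\<integral>\<^sup>+\<omega>. ennreal (indicator E \<omega> * indicator (Y (Suc j) -` B \<inter> space M) \<omega>) \<partial>M)
     = (\<integral>\<^sup>+\<omega>. indicator E \<omega> * indicator B (Y (Suc j) \<omega>) \<partial>M)"
    by (intro nn_integral_cong) (auto simp: indicator_def)
  also have "\<dots> = (\<integral>\<^sup>+\<omega>. indicator E \<omega> * phi B (Y j \<omega>) \<partial>M)" by (rule keyK[OF j B E])
  also have "\<dots> = (\<integral>\<^sup>+\<omega>. ennreal (indicator E \<omega> * enn2real (phi B (Y j \<omega>))) \<partial>M)"
    by (intro nn_integral_cong) (auto simp: indicator_def phi_fin)
  also have "enn2real \<dots> = (\<integral>\<omega>. indicator E \<omega> * enn2real (phi B (Y j \<omega>)) \<partial>M)"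
    by (rule integral_eq_nn_integral[symmetric]) auto
  finally show ?thesis .
qed

lemma part_iii:
  assumes i: "1 \<le> i" and ij: "i < j"
  shows "cond_indep M (sigma_gen M (\<lambda>\<omega>. (Y (i+1) \<omega>, Y j \<omega>))) (Y i) (Y (j+1))"
  unfolding cond_indep_def
proof (intro ballI)
  fix A B :: "real set" assume A[measurable]: "A \<in> sets borel" and B[measurable]: "B \<in> sets borel"
  have j: "1 \<le> j" using i ij by simp
  define Wf where "Wf = (\<lambda>\<omega>. (Y (i+1) \<omega>, Y j \<omega>))"
  define G where "G = vimage_algebra (space M) Wf borel"
  have Wf: "Wf \<in> measurable (H j) borel" unfolding Wf_def by (rule pair_H) (use ij in simp)
  interpret S: sigma_finite_subalgebra M G unfolding G_def by (rule sfsub[OF meas_H_M[OF Wf]])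
  have sGH: "sets G \<subseteq> sets (H j)" unfolding G_def using sets_vimage_sub[OF Wf space_H] .
  have sGM: "C \<in> sets G \<Longrightarrow> C \<in> sets M" for C using S.subalg by (auto simp: subalgebra_def)
  define phr where "phr = (\<lambda>\<omega>. enn2real (phi B (Y j \<omega>)))"
  have phrG[measurable]: "phr \<in> borel_measurable G"
  proof -
    have sndm: "snd \<in> borel_measurable (borel :: (real \<times> real) measure)"
      by (auto intro!: borel_measurable_continuous_onI continuous_intros)
    have "(\<lambda>p::real\<times>real. enn2real (phi B (snd p))) \<in> borel_measurable borel"
      using measurable_compose[OF sndm phi_m[OF B]] by measurable
    then have "(\<lambda>\<omega>. (\<lambda>p. enn2real (phi B (snd p))) (Wf \<omega>)) \<in> borel_measurable G"
      unfolding G_def by (intro vimage_meas[where f=Wf] meas_H_M[OF Wf])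
    then show ?thesis by (simp add: phr_def Wf_def)
  qed
  have phr_b: "\<bar>phr \<omega>\<bar> \<le> 1" for \<omega> by (simp add: phr_def phir_le)
  have phrM[measurable]: "phr \<in> borel_measurable M" by (rule measurable_from_subalg[OF S.subalg phrG])
  let ?SA = "Y i -` A \<inter> space M" and ?SB = "Y (j+1) -` B \<inter> space M"
  have SAH: "?SA \<in> sets (H j)"
    using measurable_sets[OF Y_H[of i j] A] ij by simp
  have [measurable]: "?SA \<in> sets M" "?SB \<in> sets M" by measurable
  define psi where "psi = real_cond_exp M G (indicator ?SA)"
  have psiG[measurable]: "psi \<in> borel_measurable G" unfolding psi_def by (rule borel_measurable_cond_exp)
  have psiM[measurable]: "psi \<in> borel_measurable M" by (rule measurable_from_subalg[OF S.subalg psiG])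
  have a: "AE \<omega> in M. cond_prob M G ?SB \<omega> = phr \<omega>"
    using markov[OF j B Wf] phrG unfolding G_def phr_def by simp
  have int1: "integrable M (\<lambda>\<omega>. f \<omega> * indicator ?SA \<omega>)" if [measurable]: "f \<in> borel_measurable M" and fb: "\<And>\<omega>. \<bar>f \<omega>\<bar> \<le> 1" for f :: "'a \<Rightarrow> real"
    by (rule integrable_const_bound[where B=1]) (auto simp: fb indicator_def abs_mult)
  have "AE \<omega> in M. cond_prob M G (Y i -` A \<inter> Y (j+1) -` B \<inter> space M) \<omega> = phr \<omega> * psi \<omega>"
    unfolding cond_prob_def
  proof (rule S.real_cond_exp_charact)
    show "integrable M (indicator (Y i -` A \<inter> Y (j+1) -` B \<inter> space M) :: 'a \<Rightarrow> real)"
      by (rule integrable_real_indicator) (auto simp: emeasure_eq_measure)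
    show "integrable M (\<lambda>\<omega>. phr \<omega> * psi \<omega>)"
      unfolding psi_def by (rule S.real_cond_exp_intg(1)) (auto intro!: int1 phrG phr_b)
    show "(\<lambda>\<omega>. phr \<omega> * psi \<omega>) \<in> borel_measurable G" using phrG psiG by measurable
    fix C assume C: "C \<in> sets G"
    then have [measurable]: "C \<in> sets M" by (rule sGM)
    have CA: "C \<inter> ?SA \<in> sets (H j)" using C sGH SAH by auto
    have "(\<integral>\<omega> \<in> C. (indicator (Y i -` A \<inter> Y (j+1) -` B \<inter> space M) \<omega> :: real) \<partial>M)
        = (\<integral>\<omega>. indicator (C \<inter> ?SA) \<omega> * indicator (Y (Suc j) -` B \<inter> space M) \<omega> \<partial>M)"
      unfolding set_lebesgue_integral_def by (intro Bochner_Integration.integral_cong) (auto simp: indicator_def)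
    also have "\<dots> = (\<integral>\<omega>. indicator (C \<inter> ?SA) \<omega> * phr \<omega> \<partial>M)"
      unfolding phr_def by (rule real_keyK[OF j B CA])
    also have "\<dots> = (\<integral>\<omega>. (indicator C \<omega> * phr \<omega>) * indicator ?SA \<omega> \<partial>M)"
      by (intro Bochner_Integration.integral_cong) (auto simp: indicator_def)
    also have "\<dots> = (\<integral>\<omega>. (indicator C \<omega> * phr \<omega>) * psi \<omega> \<partial>M)"
    proof -
      have fCG: "(\<lambda>\<omega>. indicator C \<omega> * phr \<omega>) \<in> borel_measurable G" using C phrG by measurable
      have fCM: "(\<lambda>\<omega>. indicator C \<omega> * phr \<omega>) \<in> borel_measurable M" by measurable
      have "integrable M (\<lambda>\<omega>. (indicator C \<omega> * phr \<omega>) * indicator ?SA \<omega>)"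
      proof (rule int1[OF fCM])
        show "\<bar>indicator C \<omega> * phr \<omega>\<bar> \<le> 1" for \<omega> using phr_b[of \<omega>] by (auto simp: indicator_def)
      qed
      from S.real_cond_exp_intg(2)[OF this fCG] show ?thesis unfolding psi_def by simp
    qed
    also have "\<dots> = (\<integral>\<omega> \<in> C. phr \<omega> * psi \<omega> \<partial>M)"
      unfolding set_lebesgue_integral_def by (intro Bochner_Integration.integral_cong) (auto simp: indicator_def)
    finally show "(\<integral>\<omega> \<in> C. (indicator (Y i -` A \<inter> Y (j+1) -` B \<inter> space M) \<omega> :: real) \<partial>M) = (\<integral>\<omega> \<in> C. phr \<omega> * psi \<omega> \<partial>M)" .
  qed
  then show "AE \<omega> in M. cond_prob M (sigma_gen M (\<lambda>\<omega>. (Y (i+1) \<omega>, Y j \<omega>))) (Y i -` A \<inter> Y (j+1) -` B \<inter> space M) \<omega> =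
      cond_prob M (sigma_gen M (\<lambda>\<omega>. (Y (i+1) \<omega>, Y j \<omega>))) (Y i -` A \<inter> space M) \<omega> *
      cond_prob M (sigma_gen M (\<lambda>\<omega>. (Y (i+1) \<omega>, Y j \<omega>))) (Y (j+1) -` B \<inter> space M) \<omega>"
    using a unfolding sigma_gen_def G_def[symmetric] Wf_def[symmetric]
    by eventually_elim (simp add: psi_def cond_prob_def)
qed

end

theorem lemma4p1:
  fixes M :: "'a measure" and X :: "nat \<Rightarrow> 'a \<Rightarrow> real" and F :: "real \<Rightarrow> real"
    and i j :: nat
  assumes "prob_space M"
    and "prob_space.indep_vars M (\<lambda>_. borel) X {1..}"
    and "\<And>k. k \<ge> 1 \<Longrightarrow> distr M borel (X k) = distr M borel (X 1)"
    and "\<And>y. F y = measure M {\<omega> \<in> space M. X 1 \<omega> \<le> y}"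
    and "1 \<le> i" and "i < j"
  defines "Y \<equiv> run_max X"
  shows
    "(\<forall>y. AE \<omega> in M. cond_prob M (sigma_gen M (Y j)) {\<omega> \<in> space M. Y (j+1) \<omega> \<le> y} \<omega>
                      = F y * indicator {\<omega>. y \<ge> Y j \<omega>} \<omega>)
   \<and> (i + 1 < j \<longrightarrow> (\<forall>y. AE \<omega> in M.
          cond_prob M (sigma_gen M (\<lambda>\<omega>. (Y (i+1) \<omega>, Y j \<omega>))) {\<omega> \<in> space M. Y (j+1) \<omega> \<le> y} \<omega>
        = cond_prob M (sigma_gen M (Y j)) {\<omega> \<in> space M. Y (j+1) \<omega> \<le> y} \<omega>))
   \<and> (\<forall>x. AE \<omega> in M. cond_prob M (sigma_gen M (Y (i+1))) {\<omega> \<in> space M. Y i \<omega> \<le> x} \<omega>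
          = indicator {\<omega>. x \<ge> Y (i+1) \<omega>} \<omega>
            + indicator {\<omega>. x < Y (i+1) \<omega>} \<omega> *
              (F x ^ i / (\<Sum>l=0..i. F (Y (i+1) \<omega>) ^ l * left_lim F (Y (i+1) \<omega>) ^ (i - l))))
   \<and> (i + 1 < j \<longrightarrow> (\<forall>x. AE \<omega> in M.
          cond_prob M (sigma_gen M (\<lambda>\<omega>. (Y (i+1) \<omega>, Y j \<omega>))) {\<omega> \<in> space M. Y i \<omega> \<le> x} \<omega>
        = cond_prob M (sigma_gen M (Y (i+1))) {\<omega> \<in> space M. Y i \<omega> \<le> x} \<omega>))
   \<and> cond_indep M (sigma_gen M (\<lambda>\<omega>. (Y (i+1) \<omega>, Y j \<omega>))) (Y i) (Y (j+1))"
proof -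
  interpret I: iidmax M X
    unfolding iidmax_def iidmax_axioms_def using assms(1,2) assms(3)[rule_format] by blast
  have YY: "I.Y = Y" by (simp add: I.Y_def Y_def)
  have FF: "F = I.FF"
  proof
    fix y
    have "I.FF y = measure M (X 1 -` {..y} \<inter> space M)"
      unfolding I.FF_def I.mu_def by (rule measure_distr) simp_all
    also have "X 1 -` {..y} \<inter> space M = {\<omega> \<in> space M. X 1 \<omega> \<le> y}" by auto
    finally show "F y = I.FF y" using assms(4) by simp
  qed
  have i: "1 \<le> i" and j: "1 \<le> j" using assms(5,6) by auto
  have gx: "I.gx i x s = indicator {..x} s + indicator {x<..} s * (F x ^ i / (\<Sum>l=0..i. F s ^ l * left_lim F s ^ (i - l)))" for x s
    unfolding FF I.left_lim_FF by (simp add: I.gx_def I.h_def indicator_def)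
  show ?thesis
  proof (intro conjI allI impI)
    fix y show "AE \<omega> in M. cond_prob M (sigma_gen M (Y j)) {\<omega> \<in> space M. Y (j+1) \<omega> \<le> y} \<omega>
                      = F y * indicator {\<omega>. y \<ge> Y j \<omega>} \<omega>"
      using I.part_i1[OF j, of y] unfolding YY FF .
  next
    fix y assume "i + 1 < j"
    then show "AE \<omega> in M.
          cond_prob M (sigma_gen M (\<lambda>\<omega>. (Y (i+1) \<omega>, Y j \<omega>))) {\<omega> \<in> space M. Y (j+1) \<omega> \<le> y} \<omega>
        = cond_prob M (sigma_gen M (Y j)) {\<omega> \<in> space M. Y (j+1) \<omega> \<le> y} \<omega>"
      using I.part_i2[OF i, of j y] unfolding YY by simp
  next
    fix x show "AE \<omega> in M. cond_prob M (sigma_gen M (Y (i+1))) {\<omega> \<in> space M. Y i \<omega> \<le> x} \<omega>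
          = indicator {\<omega>. x \<ge> Y (i+1) \<omega>} \<omega>
            + indicator {\<omega>. x < Y (i+1) \<omega>} \<omega> *
              (F x ^ i / (\<Sum>l=0..i. F (Y (i+1) \<omega>) ^ l * left_lim F (Y (i+1) \<omega>) ^ (i - l)))"
      using I.part_ii1[OF i, of x] unfolding YY gx by (simp add: indicator_def)
  next
    fix x assume ij: "i + 1 < j"
    show "AE \<omega> in M.
          cond_prob M (sigma_gen M (\<lambda>\<omega>. (Y (i+1) \<omega>, Y j \<omega>))) {\<omega> \<in> space M. Y i \<omega> \<le> x} \<omega>
        = cond_prob M (sigma_gen M (Y (i+1))) {\<omega> \<in> space M. Y i \<omega> \<le> x} \<omega>"
      using I.part_ii2[OF i ij, of x] I.part_ii1[OF i, of x] unfolding YY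
      by eventually_elim simp
  next
    show "cond_indep M (sigma_gen M (\<lambda>\<omega>. (Y (i+1) \<omega>, Y j \<omega>))) (Y i) (Y (j+1))"
      using I.part_iii[OF i assms(6)] unfolding YY .
  qed
qed

end
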